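(* Let $X$ be a non-negative continuous random variable with density $f$ satisfying $f(t) \le Ce^{-\lambda t}$ for all $t\ge0$, for some $C,\lambda>0$. Let $m \in (\chi_{\min},\chi_{\max})$ and $\mu = \min(\Pr[X\le m],\Pr[X\ge m])$ (so $\mu>0$). Let $Y$ be an $m$-reasonable random variable with density $g$. Then $g(t) \le \frac{C}{\mu}e^{-\lambda t}$ for all $t$, $\mathbb{E}[Y] \le \frac{C}{\mu\lambda}\cdot\frac{1}{\lambda}$, $\mathbb{E}[Y^2] \le \frac{C}{\mu\lambda}\cdot\frac{2}{\lambda^2}$, and $\Pr[Y\ge t] \le \frac{C}{\lambda\mu}e^{-\lambda t}$ for all $t \ge 0$.
   Context: $\chi_{\min} = \inf\{x:\Pr[X\ge x]>0\}$, $\chi_{\max} = \sup\{x:\Pr[X\le x]>0\}$. $X_{\le x}$ ($X_{\ge x}$) denotes $X$ conditioned on $X \le x$ ($X\ge x$). For $m\in(\chi_{\min},\chi_{\max})$, a random variable $Y$ is $m$-reasonable if either $Y = X_{\ge x}$ for some $x \le m$, or $Y = X_{\le x}$ for some $x\ge m$. *)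

theory Defs
  imports "HOL-Probability.Probability"
begin

text \<open>A continuous real random variable is represented by its density f (w.r.t. Lebesgue
measure); its distribution is the measure below.\<close>

definition dist_of :: "(real \<Rightarrow> real) \<Rightarrow> real measure" where
  "dist_of f = density lborel (\<lambda>t. ennreal (f t))"

definition Pr_le :: "(real \<Rightarrow> real) \<Rightarrow> real \<Rightarrow> real" where
  "Pr_le f x = measure (dist_of f) {..x}"

definition Pr_ge :: "(real \<Rightarrow> real) \<Rightarrow> real \<Rightarrow> real" where
  "Pr_ge f x = measure (dist_of f) {x..}"

text \<open>Essential infimum / supremum of the support (extended reals).\<close>
definition chi_min :: "(real \<Rightarrow> real) \<Rightarrow> ereal" where
  "chi_min f = Inf (ereal ` {x. Pr_le f x > 0})"

definition chi_max :: "(real \<Rightarrow> real) \<Rightarrow> ereal" where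
  "chi_max f = Sup (ereal ` {x. Pr_ge f x > 0})"

definition cond_ge_density :: "(real \<Rightarrow> real) \<Rightarrow> real \<Rightarrow> real \<Rightarrow> real" where
  "cond_ge_density f x = (\<lambda>t. indicator {x..} t * f t / Pr_ge f x)"

definition cond_le_density :: "(real \<Rightarrow> real) \<Rightarrow> real \<Rightarrow> real \<Rightarrow> real" where
  "cond_le_density f x = (\<lambda>t. indicator {..x} t * f t / Pr_le f x)"

definition m_reasonable :: "(real \<Rightarrow> real) \<Rightarrow> real \<Rightarrow> (real \<Rightarrow> real) \<Rightarrow> bool" where
  "m_reasonable f m g \<longleftrightarrow>
     (\<exists>x\<le>m. g = cond_ge_density f x) \<or> (\<exists>x\<ge>m. g = cond_le_density f x)"

end

theory Submission
  imports Defs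
begin

lemma ed_moment:
  assumes l: "0 < (l::real)"
  shows "has_bochner_integral lborel (\<lambda>x. erlang_density 0 l x * x ^ i) (fact i / l ^ i)"
proof (rule has_bochner_integral_nn_integral)
  show "(\<lambda>x. erlang_density 0 l x * x ^ i) \<in> borel_measurable lborel" by simp
  show "AE x in lborel. 0 \<le> erlang_density 0 l x * x ^ i"
    using l by (intro AE_I2) (auto simp: erlang_density_def)
  show "0 \<le> fact i / l ^ i" using l by simp
  show "(\<integral>\<^sup>+ x. ennreal (erlang_density 0 l x * x ^ i) \<partial>lborel) = ennreal (fact i / l ^ i)"
    using nn_integral_erlang_ith_moment[OF l, of 0 i] by simp
qed

lemma ed_total:
  assumes l: "0 < (l::real)"
  shows "(\<integral>\<^sup>+ x. ennreal (erlang_density 0 l x) \<partial>lborel) = 1"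
  using nn_integral_erlang_ith_moment[OF l, of 0 0] by simp

lemma ed_shift:
  assumes l: "0 < (l::real)"
  shows "(\<integral>\<^sup>+ x. ennreal (erlang_density 0 l (x - t)) \<partial>lborel) = 1"
proof -
  have "(\<integral>\<^sup>+ x. ennreal (erlang_density 0 l x) \<partial>lborel)
      = ennreal \<bar>1::real\<bar> * (\<integral>\<^sup>+ x. ennreal (erlang_density 0 l (- t + 1 * x)) \<partial>lborel)"
    by (rule nn_integral_real_affine[where c=1 and t="-t"]) auto
  then show ?thesis using ed_total[OF l] by simp
qed

theorem lemma2:
  fixes f g :: "real \<Rightarrow> real" and C l m :: real
  assumes f_meas: "f \<in> borel_measurable borel"
    and f_nonneg: "\<And>t. 0 \<le> f t"
    and X_nonneg: "\<And>t. t < 0 \<Longrightarrow> f t = 0"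
    and f_prob: "prob_space (dist_of f)"
    and C_pos: "C > 0" and l_pos: "l > 0"
    and f_bound: "\<And>t. t \<ge> 0 \<Longrightarrow> f t \<le> C * exp (- l * t)"
    and m_lo: "chi_min f < ereal m" and m_hi: "ereal m < chi_max f"
    and Y: "m_reasonable f m g"
  defines "mu \<equiv> min (Pr_le f m) (Pr_ge f m)"
  shows "(\<forall>t. g t \<le> C / mu * exp (- l * t))
       \<and> (\<integral>t. t * g t \<partial>lborel) \<le> C / (mu * l) * (1 / l)
       \<and> (\<integral>t. t\<^sup>2 * g t \<partial>lborel) \<le> C / (mu * l) * (2 / l\<^sup>2)
       \<and> (\<forall>t\<ge>0. measure (dist_of g) {t..} \<le> C / (l * mu) * exp (- l * t))"
proof -
  interpret P: prob_space "dist_of f" by (rule f_prob)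
  have sets_eq: "sets (dist_of f) = sets borel" by (simp add: dist_of_def)
  have le_mono: "Pr_le f a \<le> Pr_le f b" if "a \<le> b" for a b
    unfolding Pr_le_def using that
    by (intro P.finite_measure_mono) (auto simp: sets_eq)
  have ge_mono: "Pr_ge f b \<le> Pr_ge f a" if "a \<le> b" for a b
    unfolding Pr_ge_def using that
    by (intro P.finite_measure_mono) (auto simp: sets_eq)
  have le_pos: "Pr_le f m > 0"
  proof -
    from m_lo obtain x where "Pr_le f x > 0" "ereal x < ereal m"
      unfolding chi_min_def by (auto simp: Inf_less_iff)
    then show ?thesis using le_mono[of x m] by simp
  qed
  have ge_pos: "Pr_ge f m > 0"
  proof -
    from m_hi obtain x where "Pr_ge f x > 0" "ereal m < ereal x"
      unfolding chi_max_def by (auto simp: less_Sup_iff)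
    then show ?thesis using ge_mono[of m x] by simp
  qed
  have mu_pos: "mu > 0" unfolding mu_def using le_pos ge_pos by simp
  obtain S P where g_def: "g = (\<lambda>t. indicator S t * f t / P)" and PS: "P \<ge> mu"
    and S_meas: "S \<in> sets borel"
  proof -
    from Y show ?thesis
      unfolding m_reasonable_def
    proof
      assume "\<exists>x\<le>m. g = cond_ge_density f x"
      then obtain x where "x \<le> m" "g = cond_ge_density f x" by auto
      then show ?thesis using ge_mono[of x m]
        by (intro that[of "{x..}" "Pr_ge f x"]) (auto simp: cond_ge_density_def mu_def)
    next
      assume "\<exists>x\<ge>m. g = cond_le_density f x"
      then obtain x where "x \<ge> m" "g = cond_le_density f x" by auto
      then show ?thesis using le_mono[of m x]
        by (intro that[of "{..x}" "Pr_le f x"]) (auto simp: cond_le_density_def mu_def)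
    qed
  qed
  have P_pos: "P > 0" using PS mu_pos by simp
  have g_meas[measurable]: "g \<in> borel_measurable borel"
    unfolding g_def using f_meas S_meas by measurable
  have g_nonneg: "0 \<le> g t" for t
    unfolding g_def using f_nonneg[of t] P_pos by (auto simp: indicator_def)
  have g_neg: "g t = 0" if "t < 0" for t
    unfolding g_def using X_nonneg[OF that] by simp
  have g_le_f: "g t \<le> f t / mu" for t
  proof -
    have "g t \<le> f t / P" unfolding g_def using f_nonneg[of t] P_pos
      by (auto simp: indicator_def divide_right_mono)
    also have "\<dots> \<le> f t / mu" using f_nonneg[of t] mu_pos PS
      by (simp add: frac_le)
    finally show ?thesis .
  qed
  have B1: "g t \<le> C / mu * exp (- l * t)" for t
  proof (cases "t < 0")
    case True then show ?thesis using g_neg[OF True] C_pos mu_pos by simp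
  next
    case False
    have "g t \<le> f t / mu" by (rule g_le_f)
    also have "\<dots> \<le> C * exp (- l * t) / mu" using f_bound[of t] False mu_pos
      by (simp add: divide_right_mono)
    finally show ?thesis by simp
  qed
  define K where "K = C / (mu * l)"
  have K_pos: "K > 0" unfolding K_def using C_pos mu_pos l_pos by simp
  have B2: "g t \<le> K * erlang_density 0 l t" for t
  proof (cases "t < 0")
    case True then show ?thesis using g_neg[OF True] by (simp add: erlang_density_def)
  next
    case False
    then show ?thesis using B1[of t] l_pos unfolding K_def
      by (simp add: erlang_density_def field_simps)
  qed
  have mom: "integral\<^sup>L lborel (\<lambda>t. t ^ i * g t) \<le> K * (fact i / l ^ i)" for i
  proof -
    have hb: "has_bochner_integral lborel (\<lambda>x. K * (erlang_density 0 l x * x ^ i)) (K * (fact i / l ^ i))"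
      by (intro has_bochner_integral_mult_right ed_moment l_pos)
    have hbi: "integrable lborel (\<lambda>x. K * (erlang_density 0 l x * x ^ i))"
      using hb by (auto simp: has_bochner_integral_iff)
    have pt: "t ^ i * g t \<le> K * (erlang_density 0 l t * t ^ i)" for t
    proof (cases "t < 0")
      case True then show ?thesis using g_neg[OF True] by (simp add: erlang_density_def)
    next
      case False
      then have "t ^ i * g t \<le> t ^ i * (K * erlang_density 0 l t)"
        using B2[of t] by (intro mult_left_mono) auto
      then show ?thesis by (simp add: ac_simps)
    qed
    have pt0: "0 \<le> t ^ i * g t" if "t \<ge> 0" for t using that g_nonneg[of t] by simp
    have int: "integrable lborel (\<lambda>t. t ^ i * g t)"
    proof (rule Bochner_Integration.integrable_bound[OF hbi])
      show "(\<lambda>t. t ^ i * g t) \<in> borel_measurable lborel" by measurable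
      show "AE x in lborel. norm (x ^ i * g x) \<le> norm (K * (erlang_density 0 l x * x ^ i))"
      proof (intro AE_I2)
        fix x show "norm (x ^ i * g x) \<le> norm (K * (erlang_density 0 l x * x ^ i))"
        proof (cases "x < 0")
          case True then show ?thesis using g_neg[OF True] by simp
        next
          case False then show ?thesis using pt[of x] pt0[of x] by simp
        qed
      qed
    qed
    have "integral\<^sup>L lborel (\<lambda>t. t ^ i * g t) \<le> integral\<^sup>L lborel (\<lambda>x. K * (erlang_density 0 l x * x ^ i))"
      by (rule integral_mono[OF int hbi]) (rule pt)
    also have "\<dots> = K * (fact i / l ^ i)" using hb by (simp add: has_bochner_integral_iff)
    finally show ?thesis .
  qed
  have M1: "(\<integral>t. t * g t \<partial>lborel) \<le> C / (mu * l) * (1 / l)"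
    using mom[of 1] unfolding K_def by simp
  have M2: "(\<integral>t. t\<^sup>2 * g t \<partial>lborel) \<le> C / (mu * l) * (2 / l\<^sup>2)"
    using mom[of 2] unfolding K_def by (simp add: numeral_2_eq_2)
  have T: "measure (dist_of g) {t..} \<le> C / (l * mu) * exp (- l * t)" if t0: "t \<ge> 0" for t
  proof -
    have pw: "ennreal (g s) * indicator {t..} s \<le> ennreal (K * exp (- l * t)) * ennreal (erlang_density 0 l (s - t))" for s
    proof (cases "s \<ge> t")
      case True
      have "g s \<le> K * exp (- l * t) * erlang_density 0 l (s - t)"
        using B1[of s] True l_pos unfolding K_def
        by (simp add: erlang_density_def field_simps mult_exp_exp)
      then show ?thesis using True K_pos by (simp add: ennreal_mult'[symmetric] ennreal_leI)
    next
      case False then show ?thesis by simp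
    qed
    have "emeasure (dist_of g) {t..} = (\<integral>\<^sup>+ s. ennreal (g s) * indicator {t..} s \<partial>lborel)"
      unfolding dist_of_def by (simp add: emeasure_density)
    also have "\<dots> \<le> (\<integral>\<^sup>+ s. ennreal (K * exp (- l * t)) * ennreal (erlang_density 0 l (s - t)) \<partial>lborel)"
      by (intro nn_integral_mono pw)
    also have "\<dots> = ennreal (K * exp (- l * t)) * (\<integral>\<^sup>+ s. ennreal (erlang_density 0 l (s - t)) \<partial>lborel)"
      by (rule nn_integral_cmult) simp
    also have "\<dots> = ennreal (K * exp (- l * t))" using ed_shift[OF l_pos] by simp
    finally have "emeasure (dist_of g) {t..} \<le> ennreal (K * exp (- l * t))" .
    then have "measure (dist_of g) {t..} \<le> K * exp (- l * t)"
      unfolding measure_def using K_pos by (intro enn2real_leI) auto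
    then show ?thesis unfolding K_def by (simp add: mult.commute)
  qed
  show ?thesis using B1 M1 M2 T by blast
qed

end
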